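(* Let $Z$ be a classical random variable on $\{0,1\}^m$ and $B$ a quantum system with joint state $\rho_{ZB}=\sum_z p_z|z\rangle\langle z|\otimes\rho^z_B$. If $\|\rho_{ZB}-\rho_{U_m}\otimes\rho_B\|_{\mathrm{tr}}>\epsilon$, then there exists $i\in[m]$ such that $$\Big\|\sum_{z:\,z_i=0}p_z\,|z_{[i-1]}\rangle\langle z_{[i-1]}|\otimes\rho^z_B-\sum_{z:\,z_i=1}p_z\,|z_{[i-1]}\rangle\langle z_{[i-1]}|\otimes\rho^z_B\Big\|_{\mathrm{tr}}>\frac{\epsilon}{m}.$$
   Context: $[N]=\{1,\dots,N\}$; $z_i$ is the $i$-th bit of $z$ and $z_{[i-1]}$ the string of its first $i-1$ bits (empty for $i=1$). $\|A\|_{\mathrm{tr}}=\mathrm{tr}\sqrt{A^\dagger A}$; $\rho_{U_m}=2^{-m}\mathbb{1}$ is the fully mixed state on $m$ qubits; $\rho^z_B$ are density operators and $(p_z)$ a probability distribution. *)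

theory Defs
  imports "Jordan_Normal_Form.Matrix"
begin

definition adj :: "complex mat \<Rightarrow> complex mat" where
  "adj A = mat (dim_col A) (dim_row A) (\<lambda>(i,j). cnj (A $$ (j,i)))"

definition mtrace :: "complex mat \<Rightarrow> complex" where
  "mtrace A = (\<Sum>i<dim_row A. A $$ (i,i))"

definition psd :: "nat \<Rightarrow> complex mat \<Rightarrow> bool" where
  "psd n A \<longleftrightarrow> A \<in> carrier_mat n n \<and> adj A = A \<and>
     (\<forall>v \<in> carrier_vec n. (\<Sum>i<n. cnj (v $ i) * (A *\<^sub>v v) $ i) \<ge> 0)"

definition msqrt :: "complex mat \<Rightarrow> complex mat" where
  "msqrt A = (THE S. psd (dim_row A) S \<and> S * S = A)"

definition trace_norm :: "complex mat \<Rightarrow> real" where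
  "trace_norm A = Re (mtrace (msqrt (adj A * A)))"

definition density_op :: "nat \<Rightarrow> complex mat \<Rightarrow> bool" where
  "density_op d \<rho> \<longleftrightarrow> psd d \<rho> \<and> mtrace \<rho> = 1"

(* bit strings {0,1}^k, as boolean lists (True = 1) *)
definition bitstrings :: "nat \<Rightarrow> bool list set" where
  "bitstrings k = {z. length z = k}"

(* standard basis index of |z>, big-endian: z_1 is the most significant bit *)
fun bits_to_nat :: "bool list \<Rightarrow> nat" where
  "bits_to_nat [] = 0"
| "bits_to_nat (b # bs) = (if b then 2 ^ length bs else 0) + bits_to_nat bs"

definition nat_to_bits :: "nat \<Rightarrow> nat \<Rightarrow> bool list" where
  "nat_to_bits k n = (THE z. z \<in> bitstrings k \<and> bits_to_nat z = n)"

(* classical-quantum operator  \<Sum>_{x \<in> {0,1}^k} |x><x| \<otimes> F x  on C^(2^k) \<otimes> C^d,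
   where F x is a d x d matrix; Kronecker ordering: row index = x * d + b *)
definition cq_op :: "nat \<Rightarrow> nat \<Rightarrow> (bool list \<Rightarrow> complex mat) \<Rightarrow> complex mat" where
  "cq_op k d F = mat (2^k * d) (2^k * d)
     (\<lambda>(r,c). if r div d = c div d then F (nat_to_bits k (r div d)) $$ (r mod d, c mod d) else 0)"

definition wsum :: "nat \<Rightarrow> bool list set \<Rightarrow> (bool list \<Rightarrow> real) \<Rightarrow> (bool list \<Rightarrow> complex mat) \<Rightarrow> complex mat" where
  "wsum d S w M = mat d d (\<lambda>(a,b). \<Sum>z\<in>S. complex_of_real (w z) * M z $$ (a,b))"

end

theory Submission
  imports Defs "Jordan_Normal_Form.Schur_Decomposition" "Jordan_Normal_Form.Spectral_Radius"
begin


lemma mult_entry: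
  assumes "A \<in> carrier_mat n k" "B \<in> carrier_mat k m" "i < n" "j < m"
  shows "(A * B) $$ (i,j) = (\<Sum>t<k. A $$ (i,t) * B $$ (t,j))"
  using assms by (auto simp: scalar_prod_def intro!: sum.cong)

lemma adj_dims[simp]: "dim_row (adj A) = dim_col A" "dim_col (adj A) = dim_row A"
  by (auto simp: adj_def)

lemma adj_index[simp]: "i < dim_col A \<Longrightarrow> j < dim_row A \<Longrightarrow> adj A $$ (i,j) = cnj (A $$ (j,i))"
  by (auto simp: adj_def)

lemma adj_carrier[simp]: "A \<in> carrier_mat n m \<Longrightarrow> adj A \<in> carrier_mat m n"
  unfolding carrier_mat_def by simp

lemma adj_adj[simp]: "adj (adj A) = A"
  by (rule eq_matI, auto)

lemma adj_mult:
  assumes "A \<in> carrier_mat n k" "B \<in> carrier_mat k m"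
  shows "adj (A * B) = adj B * adj A"
proof (rule eq_matI)
  fix i j assume ij: "i < dim_row (adj B * adj A)" "j < dim_col (adj B * adj A)"
  hence i: "i < m" and j: "j < n" using assms by auto
  show "adj (A * B) $$ (i, j) = (adj B * adj A) $$ (i, j)"
  proof -
    have "adj (A * B) $$ (i, j) = cnj ((A * B) $$ (j, i))" using assms i j by simp
    also have "\<dots> = (\<Sum>t<k. cnj (A $$ (j,t)) * cnj (B $$ (t,i)))"
      using mult_entry[OF assms j i] by simp
    also have "\<dots> = (adj B * adj A) $$ (i, j)"
      using mult_entry[of "adj B" m k "adj A" n i j] assms i j by (simp add: mult.commute)
    finally show ?thesis .
  qed
qed (use assms in auto)

lemma adj_one[simp]: "adj (1\<^sub>m n) = 1\<^sub>m n"
  by (rule eq_matI, auto)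

lemma adj_add: "A \<in> carrier_mat n m \<Longrightarrow> B \<in> carrier_mat n m \<Longrightarrow> adj (A + B) = adj A + adj B"
  by (rule eq_matI, auto)

lemma adj_minus: "A \<in> carrier_mat n m \<Longrightarrow> B \<in> carrier_mat n m \<Longrightarrow> adj (A - B) = adj A - adj B"
  by (rule eq_matI, auto)

lemma adj_smult_real: "adj (complex_of_real c \<cdot>\<^sub>m A) = complex_of_real c \<cdot>\<^sub>m adj A"
  by (rule eq_matI, auto)

definition unitary :: "nat \<Rightarrow> complex mat \<Rightarrow> bool" where
  "unitary n W \<longleftrightarrow> W \<in> carrier_mat n n \<and> adj W * W = 1\<^sub>m n"

lemma unitary_right: "unitary n W \<Longrightarrow> W * adj W = 1\<^sub>m n"
  unfolding unitary_def using mat_mult_left_right_inverse[of "adj W" n W] by auto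

lemma unitary_adj: "unitary n W \<Longrightarrow> unitary n (adj W)"
  unfolding unitary_def using unitary_right[unfolded unitary_def] by auto

lemma unitary_mult: "unitary n V \<Longrightarrow> unitary n W \<Longrightarrow> unitary n (V * W)"
proof -
  assume V: "unitary n V" and W: "unitary n W"
  hence c: "V \<in> carrier_mat n n" "W \<in> carrier_mat n n" by (auto simp: unitary_def)
  have "adj (V * W) * (V * W) = (adj W * adj V) * (V * W)"
    using c by (simp add: adj_mult[of V n n W n])
  also have "\<dots> = adj W * (adj V * (V * W))"
    using c by (intro assoc_mult_mat[of _ n n _ n _ n]) auto
  also have "adj V * (V * W) = (adj V * V) * W"
    using c by (intro assoc_mult_mat[symmetric, of _ n n _ n _ n]) auto
  also have "\<dots> = W" using V c by (simp add: unitary_def)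
  also have "adj W * W = 1\<^sub>m n" using W by (simp add: unitary_def)
  finally show ?thesis using c by (simp add: unitary_def)
qed

definition diagm :: "nat \<Rightarrow> (nat \<Rightarrow> real) \<Rightarrow> complex mat" where
  "diagm n l = mat n n (\<lambda>(i,j). if i = j then complex_of_real (l i) else 0)"

lemma diagm_carrier[simp]: "diagm n l \<in> carrier_mat n n"
  "dim_row (diagm n l) = n" "dim_col (diagm n l) = n"
  by (simp_all add: diagm_def)

lemma diagm_index[simp]: "i < n \<Longrightarrow> j < n \<Longrightarrow> diagm n l $$ (i,j) = (if i = j then complex_of_real (l i) else 0)"
  by (simp add: diagm_def)

lemma adj_diagm[simp]: "adj (diagm n l) = diagm n l"
  by (rule eq_matI, auto)



declare index_mult_mat(1)[simp del]

lemma sq_mult_carrier[simp]: "A \<in> carrier_mat n n \<Longrightarrow> B \<in> carrier_mat n n \<Longrightarrow> A * B \<in> carrier_mat n n"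
  by auto

lemma mv_entry:
  assumes "A \<in> carrier_mat m n" "i < m"
  shows "(A *\<^sub>v vec n f) $ i = (\<Sum>j<n. A $$ (i,j) * f j)"
  using assms by (auto simp: scalar_prod_def intro!: sum.cong)

lemma mv_entry2:
  assumes "A \<in> carrier_mat m n" "v \<in> carrier_vec n" "i < m"
  shows "(A *\<^sub>v v) $ i = (\<Sum>j<n. A $$ (i,j) * v $ j)"
  using assms by (auto simp: scalar_prod_def intro!: sum.cong)

lemma diagm_mult: "diagm n a * diagm n b = diagm n (\<lambda>k. a k * b k)"
proof (rule eq_matI)
  fix i j assume "i < dim_row (diagm n (\<lambda>k. a k * b k))" "j < dim_col (diagm n (\<lambda>k. a k * b k))"
  hence ij: "i < n" "j < n" by auto
  have "(diagm n a * diagm n b) $$ (i,j) = (\<Sum>t<n. diagm n a $$ (i,t) * diagm n b $$ (t,j))"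
    using ij by (intro mult_entry) auto
  also have "\<dots> = (\<Sum>t\<in>{i}. diagm n a $$ (i,t) * diagm n b $$ (t,j))"
    using ij by (intro sum.mono_neutral_right) auto
  also have "\<dots> = diagm n (\<lambda>k. a k * b k) $$ (i,j)" using ij by simp
  finally show "(diagm n a * diagm n b) $$ (i,j) = diagm n (\<lambda>k. a k * b k) $$ (i,j)" .
qed auto

lemma mult_diagm_entry:
  assumes "W \<in> carrier_mat m n" "i < m" "j < n"
  shows "(W * diagm n l) $$ (i,j) = W $$ (i,j) * complex_of_real (l j)"
proof -
  have "(W * diagm n l) $$ (i,j) = (\<Sum>t<n. W $$ (i,t) * diagm n l $$ (t,j))"
    using assms by (intro mult_entry) auto
  also have "\<dots> = (\<Sum>t\<in>{j}. W $$ (i,t) * diagm n l $$ (t,j))"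
    using assms by (intro sum.mono_neutral_right) auto
  finally show ?thesis using assms by simp
qed

lemma wdw_entry:
  assumes "V \<in> carrier_mat n n" "i < n" "j < n"
  shows "(V * diagm n l * adj V) $$ (i,j) = (\<Sum>k<n. V $$ (i,k) * complex_of_real (l k) * cnj (V $$ (j,k)))"
proof -
  have "(V * diagm n l * adj V) $$ (i,j) = (\<Sum>k<n. (V * diagm n l) $$ (i,k) * adj V $$ (k,j))"
    using assms by (intro mult_entry[of _ n n]) auto
  also have "\<dots> = (\<Sum>k<n. V $$ (i,k) * complex_of_real (l k) * cnj (V $$ (j,k)))"
    using assms by (intro sum.cong) (auto simp: mult_diagm_entry simp del: index_mult_mat)
  finally show ?thesis .
qed

definition mtr :: "nat \<Rightarrow> complex mat \<Rightarrow> complex" where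
  "mtr n A = (\<Sum>i<n. A $$ (i,i))"

lemma mtrace_mtr: "A \<in> carrier_mat n n \<Longrightarrow> mtrace A = mtr n A"
  by (simp add: mtrace_def mtr_def)

lemma mtr_comm:
  assumes "A \<in> carrier_mat n m" "B \<in> carrier_mat m n"
  shows "mtr n (A * B) = mtr m (B * A)"
proof -
  have "mtr n (A * B) = (\<Sum>i<n. \<Sum>t<m. A $$ (i,t) * B $$ (t,i))"
    using assms by (auto simp: mtr_def mult_entry simp del: index_mult_mat intro!: sum.cong)
  also have "\<dots> = (\<Sum>t<m. \<Sum>i<n. B $$ (t,i) * A $$ (i,t))"
    by (subst sum.swap) (simp add: mult.commute)
  also have "\<dots> = mtr m (B * A)"
    using assms by (auto simp: mtr_def mult_entry simp del: index_mult_mat intro!: sum.cong)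
  finally show ?thesis .
qed

lemma mtr_diagm: "mtr n (diagm n l) = (\<Sum>k<n. complex_of_real (l k))"
  by (simp add: mtr_def)

lemma mtr_wdw:
  assumes "unitary n W"
  shows "mtr n (W * diagm n l * adj W) = (\<Sum>k<n. complex_of_real (l k))"
proof -
  have W: "W \<in> carrier_mat n n" "adj W * W = 1\<^sub>m n" using assms by (auto simp: unitary_def)
  have "mtr n (W * diagm n l * adj W) = mtr n (adj W * (W * diagm n l))"
    using W by (intro mtr_comm) auto
  also have "adj W * (W * diagm n l) = (adj W * W) * diagm n l"
    using W by (intro assoc_mult_mat[symmetric, of _ n n _ n _ n]) auto
  also have "\<dots> = diagm n l" using W by simp
  finally show ?thesis by (simp add: mtr_diagm)
qed

lemma adj_sum_identity:
  assumes A: "A \<in> carrier_mat m n"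
  shows "(\<Sum>i<m. cnj (v i) * (\<Sum>j<n. A $$ (i,j) * y j)) =
         (\<Sum>j<n. cnj (\<Sum>i<m. adj A $$ (j,i) * v i) * y j)"
proof -
  have "(\<Sum>i<m. cnj (v i) * (\<Sum>j<n. A $$ (i,j) * y j)) = (\<Sum>i<m. \<Sum>j<n. cnj (v i) * A $$ (i,j) * y j)"
    by (simp add: sum_distrib_left mult.assoc)
  also have "\<dots> = (\<Sum>j<n. \<Sum>i<m. cnj (v i) * A $$ (i,j) * y j)" by (rule sum.swap)
  also have "\<dots> = (\<Sum>j<n. cnj (\<Sum>i<m. adj A $$ (j,i) * v i) * y j)"
  proof (rule sum.cong[OF refl])
    fix j assume j: "j \<in> {..<n}"
    have "cnj (\<Sum>i<m. adj A $$ (j,i) * v i) = (\<Sum>i<m. A $$ (i,j) * cnj (v i))"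
      using A j by (auto intro!: sum.cong)
    thus "(\<Sum>i<m. cnj (v i) * A $$ (i,j) * y j) = cnj (\<Sum>i<m. adj A $$ (j,i) * v i) * y j"
      by (simp add: sum_distrib_right sum_distrib_left mult.commute mult.left_commute)
  qed
  finally show ?thesis .
qed

lemma adj_wdw:
  assumes "W \<in> carrier_mat n n"
  shows "adj (W * diagm n l * adj W) = W * diagm n l * adj W"
proof -
  have "adj (W * diagm n l * adj W) = adj (adj W) * adj (W * diagm n l)"
    using assms by (intro adj_mult[of _ n n]) auto
  also have "adj (W * diagm n l) = diagm n l * adj W"
    using assms by (simp add: adj_mult[of W n n "diagm n l" n])
  also have "adj (adj W) * (diagm n l * adj W) = W * diagm n l * adj W"
    using assms by (simp add: assoc_mult_mat[of _ n n _ n _ n])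
  finally show ?thesis .
qed

lemma unitary_cancel:
  assumes "unitary n W" "X \<in> carrier_mat n m"
  shows "adj W * (W * X) = X"
proof -
  have W: "W \<in> carrier_mat n n" "adj W * W = 1\<^sub>m n" using assms by (auto simp: unitary_def)
  have "adj W * (W * X) = (adj W * W) * X"
    using W assms(2) by (intro assoc_mult_mat[symmetric, of _ n n _ n _ m]) auto
  thus ?thesis using W assms(2) by simp
qed

lemma unitary_cancel2:
  assumes "unitary n W" "X \<in> carrier_mat n m"
  shows "W * (adj W * X) = X"
  using unitary_cancel[OF unitary_adj[OF assms(1)] assms(2)] by simp

lemma wdw_mult:
  assumes "unitary n W"
  shows "(W * diagm n a * adj W) * (W * diagm n b * adj W) = W * diagm n (\<lambda>k. a k * b k) * adj W"
proof -
  have W: "W \<in> carrier_mat n n" "adj W * W = 1\<^sub>m n" using assms by (auto simp: unitary_def)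
  have "(W * diagm n a * adj W) * (W * diagm n b * adj W) = W * (diagm n a * (adj W * (W * (diagm n b * adj W))))"
    using W(1) by (simp add: assoc_mult_mat[of _ n n _ n _ n])
  also have "adj W * (W * (diagm n b * adj W)) = diagm n b * adj W"
    using unitary_cancel[OF assms, of "diagm n b * adj W" n] W by simp
  also have "W * (diagm n a * (diagm n b * adj W)) = W * (diagm n a * diagm n b) * adj W"
    using W(1) by (simp add: assoc_mult_mat[of _ n n _ n _ n])
  finally show ?thesis by (simp add: diagm_mult)
qed

lemma cnj_mult_self: "cnj z * z = complex_of_real ((cmod z)^2)"
  by (metis complex_norm_square mult.commute of_real_power)

lemma psd_wdw:
  assumes "unitary n W" "\<forall>k<n. l k \<ge> 0"
  shows "psd n (W * diagm n l * adj W)"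
proof -
  have W: "W \<in> carrier_mat n n" using assms by (auto simp: unitary_def)
  let ?X = "W * diagm n l * adj W"
  have X: "?X \<in> carrier_mat n n" using W by auto
  have q: "(\<Sum>i<n. cnj (v $ i) * (?X *\<^sub>v v) $ i) \<ge> 0" if v: "v \<in> carrier_vec n" for v
  proof -
    define u where "u k = (\<Sum>j<n. cnj (W $$ (j,k)) * v $ j)" for k
    have "(\<Sum>i<n. cnj (v $ i) * (?X *\<^sub>v v) $ i)
        = (\<Sum>i<n. cnj (v $ i) * (\<Sum>j<n. (\<Sum>k<n. W $$ (i,k) * complex_of_real (l k) * cnj (W $$ (j,k))) * v $ j))"
    proof (intro sum.cong refl)
      fix i assume i: "i \<in> {..<n}"
      have "(?X *\<^sub>v v) $ i = (\<Sum>j<n. ?X $$ (i,j) * v $ j)" using i X v by (intro mv_entry2) auto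
      also have "\<dots> = (\<Sum>j<n. (\<Sum>k<n. W $$ (i,k) * complex_of_real (l k) * cnj (W $$ (j,k))) * v $ j)"
        using i W by (intro sum.cong refl) (simp add: wdw_entry)
      finally show "cnj (v $ i) * (?X *\<^sub>v v) $ i = cnj (v $ i) * (\<Sum>j<n. (\<Sum>k<n. W $$ (i,k) * complex_of_real (l k) * cnj (W $$ (j,k))) * v $ j)"
        by simp
    qed
    also have "\<dots> = (\<Sum>i<n. \<Sum>j<n. \<Sum>k<n. cnj (v $ i) * W $$ (i,k) * complex_of_real (l k) * cnj (W $$ (j,k)) * v $ j)"
      by (simp add: sum_distrib_left sum_distrib_right mult.assoc)
    also have "\<dots> = (\<Sum>i<n. \<Sum>k<n. \<Sum>j<n. cnj (v $ i) * W $$ (i,k) * complex_of_real (l k) * cnj (W $$ (j,k)) * v $ j)"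
      by (intro sum.cong refl sum.swap)
    also have "\<dots> = (\<Sum>k<n. \<Sum>i<n. \<Sum>j<n. cnj (v $ i) * W $$ (i,k) * complex_of_real (l k) * cnj (W $$ (j,k)) * v $ j)"
      by (rule sum.swap)
    also have "\<dots> = (\<Sum>k<n. complex_of_real (l k) * (cnj (u k) * u k))"
    proof (intro sum.cong refl)
      fix k
      have "cnj (u k) = (\<Sum>i<n. cnj (v $ i) * W $$ (i,k))"
        by (simp add: u_def mult.commute)
      hence "cnj (u k) * u k = (\<Sum>i<n. cnj (v $ i) * W $$ (i,k)) * (\<Sum>j<n. cnj (W $$ (j,k)) * v $ j)"
        by (simp add: u_def)
      also have "\<dots> = (\<Sum>i<n. \<Sum>j<n. cnj (v $ i) * W $$ (i,k) * (cnj (W $$ (j,k)) * v $ j))"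
        by (rule sum_product)
      finally show "(\<Sum>i<n. \<Sum>j<n. cnj (v $ i) * W $$ (i,k) * complex_of_real (l k) * cnj (W $$ (j,k)) * v $ j)
          = complex_of_real (l k) * (cnj (u k) * u k)"
        by (simp add: sum_distrib_left mult_ac)
    qed
    also have "\<dots> = (\<Sum>k<n. complex_of_real (l k * (cmod (u k))^2))"
      by (simp add: cnj_mult_self)
    also have "\<dots> \<ge> 0"
      using assms(2) by (intro sum_nonneg) (auto simp: less_eq_complex_def)
    finally show ?thesis .
  qed
  show ?thesis unfolding psd_def using X q adj_wdw[OF W] by auto
qed

lemma complex_of_real_ge0: "complex_of_real r \<ge> 0 \<longleftrightarrow> r \<ge> 0"
  by (simp add: less_eq_complex_def)

lemma sqrt_unique:
  assumes U: "unitary n W" and l: "\<forall>k<n. l k \<ge> 0"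
    and S: "psd n S" and SS: "S * S = W * diagm n (\<lambda>k. l k * l k) * adj W"
  shows "S = W * diagm n l * adj W"
proof -
  have W: "W \<in> carrier_mat n n" "adj W * W = 1\<^sub>m n" "W * adj W = 1\<^sub>m n"
    using U unitary_right[OF U] by (auto simp: unitary_def)
  have Sc: "S \<in> carrier_mat n n" and Sh: "adj S = S" using S by (auto simp: psd_def)
  have Spos: "\<And>v. v \<in> carrier_vec n \<Longrightarrow> (\<Sum>i<n. cnj (v $ i) * (S *\<^sub>v v) $ i) \<ge> 0"
    using S by (auto simp: psd_def)
  define D where "D = diagm n l"
  define X where "X = S * W - W * D"
  have SSW: "S * (S * W) = W * diagm n (\<lambda>k. l k * l k)"
  proof -
    have "S * (S * W) = (S * S) * W" using Sc W by (simp add: assoc_mult_mat[of _ n n _ n _ n])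
    also have "\<dots> = W * (diagm n (\<lambda>k. l k * l k) * (adj W * W))"
      unfolding SS using W by (simp add: assoc_mult_mat[of _ n n _ n _ n])
    finally show ?thesis using W by simp
  qed
  have SWe: "(S * W) $$ (i,k) = (\<Sum>j<n. S $$ (i,j) * W $$ (j,k))" if "i < n" "k < n" for i k
    using that Sc W by (intro mult_entry) auto
  have Xe: "X $$ (i,k) = (S * W) $$ (i,k) - W $$ (i,k) * complex_of_real (l k)" if "i < n" "k < n" for i k
    using that Sc W by (simp add: X_def D_def mult_diagm_entry)
  have SXe: "(\<Sum>j<n. S $$ (i,j) * X $$ (j,k)) = - complex_of_real (l k) * X $$ (i,k)"
    if i: "i < n" and k: "k < n" for i k
  proof -
    have "(\<Sum>j<n. S $$ (i,j) * X $$ (j,k))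
        = (\<Sum>j<n. S $$ (i,j) * (S * W) $$ (j,k)) - (\<Sum>j<n. S $$ (i,j) * W $$ (j,k)) * complex_of_real (l k)"
      using k by (simp add: Xe right_diff_distrib sum_subtractf sum_distrib_right mult.assoc)
    also have "(\<Sum>j<n. S $$ (i,j) * (S * W) $$ (j,k)) = (S * (S * W)) $$ (i,k)"
      using i k Sc W by (intro mult_entry[symmetric]) auto
    also have "\<dots> = W $$ (i,k) * complex_of_real (l k * l k)"
      unfolding SSW using i k W by (simp add: mult_diagm_entry)
    also have "(\<Sum>j<n. S $$ (i,j) * W $$ (j,k)) = (S * W) $$ (i,k)"
      using i k by (simp add: SWe)
    finally show ?thesis using i k by (simp add: Xe algebra_simps)
  qed
  have X0: "X $$ (i,k) = 0" if i: "i < n" and k: "k < n" for i k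
  proof -
    define f where "f j = X $$ (j,k)" for j
    define v where "v = vec n f"
    have v: "v \<in> carrier_vec n" by (simp add: v_def)
    have Sv: "(S *\<^sub>v v) $ j = - complex_of_real (l k) * f j" if "j < n" for j
      unfolding v_def mv_entry[OF Sc that] using SXe[OF that k] by (simp add: f_def)
    define N where "N = (\<Sum>j<n. (cmod (f j))^2)"
    have N0: "N \<ge> 0" by (simp add: N_def sum_nonneg)
    have cN: "(\<Sum>j<n. cnj (f j) * f j) = complex_of_real N"
      by (simp add: N_def cnj_mult_self)
    have "(\<Sum>j<n. cnj (v $ j) * (S *\<^sub>v v) $ j) = (\<Sum>j<n. - complex_of_real (l k) * (cnj (f j) * f j))"
    proof (intro sum.cong refl)
      fix j assume "j \<in> {..<n}"
      hence j: "j < n" by simp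
      have "v $ j = f j" using j by (simp add: v_def)
      thus "cnj (v $ j) * (S *\<^sub>v v) $ j = - complex_of_real (l k) * (cnj (f j) * f j)"
        by (simp add: Sv[OF j])
    qed
    also have "\<dots> = - complex_of_real (l k) * complex_of_real N"
      by (simp add: sum_distrib_left flip: cN)
    finally have "(\<Sum>j<n. cnj (v $ j) * (S *\<^sub>v v) $ j) = - complex_of_real (l k) * complex_of_real N" .
    hence "complex_of_real (- l k * N) \<ge> 0" using Spos[OF v] by (simp del: of_real_mult add: of_real_mult[symmetric])
    hence neg: "- l k * N \<ge> 0" by (simp only: complex_of_real_ge0)
    have "N = 0"
    proof (cases "l k = 0")
      case False
      with l k have "l k > 0" by force
      with neg N0 show ?thesis by (simp add: mult_le_0_iff)
    next
      case True
      have fe: "f j = (\<Sum>i<n. S $$ (j,i) * W $$ (i,k))" if "j < n" for j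
        using that k True by (simp add: f_def Xe SWe)
      have "complex_of_real N = (\<Sum>j<n. cnj (\<Sum>i<n. adj S $$ (j,i) * W $$ (i,k)) * f j)"
        unfolding cN[symmetric] Sh by (intro sum.cong refl) (simp add: fe)
      also have "\<dots> = (\<Sum>i<n. cnj (W $$ (i,k)) * (\<Sum>j<n. S $$ (i,j) * f j))"
        by (rule adj_sum_identity[OF Sc, symmetric])
      also have "\<dots> = 0"
        using True SXe[OF _ k] by (simp add: f_def)
      finally show ?thesis by simp
    qed
    hence "(cmod (f i))^2 = 0"
      using N_def i by (simp add: sum_nonneg_eq_0_iff)
    thus ?thesis by (simp add: f_def)
  qed
  have SW: "S * W = W * D"
  proof (rule eq_matI)
    fix i k assume "i < dim_row (W * D)" "k < dim_col (W * D)"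
    hence ik: "i < n" "k < n" using W by (auto simp: D_def)
    have "X $$ (i,k) = (S * W) $$ (i,k) - (W * D) $$ (i,k)"
      using ik Sc W by (simp add: X_def D_def)
    thus "(S * W) $$ (i,k) = (W * D) $$ (i,k)" using X0[OF ik] by simp
  qed (use Sc W in \<open>auto simp: D_def\<close>)
  have "S = S * (W * adj W)" using W Sc by simp
  also have "\<dots> = (S * W) * adj W" using W Sc by (simp add: assoc_mult_mat[of _ n n _ n _ n])
  finally show ?thesis unfolding SW D_def .
qed

lemma trace_norm_herm:
  assumes U: "unitary n W" and A: "A = W * diagm n l * adj W"
  shows "trace_norm A = (\<Sum>k<n. \<bar>l k\<bar>)"
proof -
  have W: "W \<in> carrier_mat n n" using U by (auto simp: unitary_def)
  have AA: "adj A * A = W * diagm n (\<lambda>k. \<bar>l k\<bar> * \<bar>l k\<bar>) * adj W"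
    unfolding A adj_wdw[OF W] wdw_mult[OF U] by simp
  have dim: "dim_row (adj A * A) = n" unfolding AA using W by simp
  let ?S = "W * diagm n (\<lambda>k. \<bar>l k\<bar>) * adj W"
  have ms: "msqrt (adj A * A) = ?S"
    unfolding msqrt_def dim
  proof (rule the_equality)
    show "psd n ?S \<and> ?S * ?S = adj A * A"
      using psd_wdw[OF U] wdw_mult[OF U] AA by auto
  next
    fix S assume "psd n S \<and> S * S = adj A * A"
    thus "S = ?S" using sqrt_unique[OF U, of "\<lambda>k. \<bar>l k\<bar>" S] AA by auto
  qed
  have "mtrace ?S = mtr n ?S" using W by (intro mtrace_mtr) auto
  also have "\<dots> = (\<Sum>k<n. complex_of_real \<bar>l k\<bar>)" by (rule mtr_wdw[OF U])
  finally show ?thesis unfolding trace_norm_def ms by simp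
qed




lemma cprod_self: "w \<in> carrier_vec n \<Longrightarrow> w \<bullet>c w = complex_of_real (\<Sum>t<n. (cmod (w $ t))^2)"
  by (auto simp: scalar_prod_def atLeast0LessThan complex_norm_square[symmetric] simp del: of_real_power intro!: sum.cong)

lemma unit_completion:
  assumes v: "v \<in> carrier_vec n" and v0: "v \<noteq> 0\<^sub>v n"
  shows "\<exists>W c. unitary n W \<and> c \<noteq> 0 \<and> (\<forall>i<n. W $$ (i,0) = c * v $ i)"
proof -
  interpret cof_vec_space n "TYPE(complex)" .
  define b where "b = basis_completion v"
  from basis_completion[OF v v0, folded b_def]
  have dist_b: "distinct b" and indep: "\<not> lin_dep (set b)" and bc: "set b \<subseteq> carrier_vec n"
    and hdb: "hd b = v" and len_b: "length b = n" by auto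
  have n0: "n \<noteq> 0" using v v0 by (auto intro!: eq_vecI)
  from hdb len_b n0 obtain vs where bv: "b = v # vs" by (cases b, auto)
  define ws where "ws = gram_schmidt n b"
  from gram_schmidt_result[OF bc dist_b indep ws_def]
  have orth: "corthogonal ws" and wsc: "set ws \<subseteq> carrier_vec n" and len: "length ws = n"
    by (auto simp: len_b)
  have hdws: "hd ws = v" unfolding ws_def bv using v by simp
  have ws0: "ws ! 0 = v" using hdws n0 len by (cases ws, auto)
  define nr where "nr j = (\<Sum>t<n. (cmod (ws ! j $ t))^2)" for j
  have wsj: "j < n \<Longrightarrow> ws ! j \<in> carrier_vec n" for j using wsc len by auto
  have self: "j < n \<Longrightarrow> ws ! j \<bullet>c ws ! j = complex_of_real (nr j)" for j
    using cprod_self[OF wsj] by (simp add: nr_def)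
  have nrpos: "j < n \<Longrightarrow> nr j > 0" for j
  proof -
    assume j: "j < n"
    have "ws ! j \<bullet>c ws ! j \<noteq> 0" using orth j len by (auto simp: corthogonal_def)
    hence "nr j \<noteq> 0" using self[OF j] by auto
    moreover have "nr j \<ge> 0" by (simp add: nr_def sum_nonneg)
    ultimately show ?thesis by simp
  qed
  define c where "c j = complex_of_real (1 / sqrt (nr j))" for j
  define W where "W = mat n n (\<lambda>(i,j). c j * ws ! j $ i)"
  have Wc: "W \<in> carrier_mat n n" by (simp add: W_def)
  have WW: "adj W * W = 1\<^sub>m n"
  proof (rule eq_matI)
    fix i j assume "i < dim_row (1\<^sub>m n)" "j < dim_col (1\<^sub>m n)"
    hence ij: "i < n" "j < n" by auto
    have "(adj W * W) $$ (i,j) = (\<Sum>t<n. adj W $$ (i,t) * W $$ (t,j))"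
      using Wc ij by (intro mult_entry) auto
    also have "\<dots> = (\<Sum>t<n. c i * c j * (ws ! j $ t * cnj (ws ! i $ t)))"
      using Wc ij by (intro sum.cong refl) (auto simp: W_def c_def)
    also have "\<dots> = c i * c j * (ws ! j \<bullet>c ws ! i)"
      using wsj[OF ij(1)] wsj[OF ij(2)]
      by (simp add: sum_distrib_left scalar_prod_def atLeast0LessThan)
    also have "\<dots> = (if i = j then 1 else 0)"
    proof (cases "i = j")
      case True
      have "c i * c i * complex_of_real (nr i) = complex_of_real (1 / sqrt (nr i) * (1 / sqrt (nr i)) * nr i)"
        by (simp only: c_def of_real_mult)
      also have "1 / sqrt (nr i) * (1 / sqrt (nr i)) * nr i = 1"
      proof -
        have p: "nr i > 0" using nrpos[OF ij(1)] .
        have "sqrt (nr i) * sqrt (nr i) = nr i" using p by simp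
        thus ?thesis using p by (simp add: field_simps)
      qed
      finally show ?thesis using True self[OF ij(1)] by simp
    next
      case False
      hence "ws ! j \<bullet>c ws ! i = 0" using orth ij len by (auto simp: corthogonal_def)
      thus ?thesis using False by simp
    qed
    finally show "(adj W * W) $$ (i,j) = 1\<^sub>m n $$ (i,j)" using ij by simp
  qed (use Wc in auto)
  have "c 0 \<noteq> 0" using nrpos[of 0] n0 by (simp add: c_def)
  moreover have "\<forall>i<n. W $$ (i,0) = c 0 * v $ i" using n0 ws0 by (simp add: W_def)
  ultimately show ?thesis using Wc WW unfolding unitary_def by blast
qed

lemma eigen_exists:
  fixes A :: "complex mat"
  assumes A: "A \<in> carrier_mat n n" and n: "n > 0"
  shows "\<exists>v e. v \<in> carrier_vec n \<and> v \<noteq> 0\<^sub>v n \<and> A *\<^sub>v v = e \<cdot>\<^sub>v v"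
proof -
  from spectrum_non_empty[OF A n] obtain e where "eigenvalue A e" by (auto simp: spectrum_def)
  then obtain v where "eigenvector A v e" by (auto simp: eigenvalue_def)
  thus ?thesis using A by (auto simp: eigenvector_def)
qed

lemma sum_Suc_split: "(\<Sum>t<Suc k. f t) = f 0 + (\<Sum>t<k. f (Suc t))"
  by (rule sum.lessThan_Suc_shift)

theorem spectral:
  assumes "A \<in> carrier_mat n n" "adj A = A"
  shows "\<exists>W l. unitary n W \<and> A = W * diagm n l * adj W"
  using assms
proof (induction n arbitrary: A)
  case 0
  have "A = 1\<^sub>m 0 * diagm 0 (\<lambda>_. 0) * adj (1\<^sub>m 0)"
    using 0 by (intro eq_matI) auto
  moreover have "unitary 0 (1\<^sub>m 0)" by (simp add: unitary_def)
  ultimately show ?case by blast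
next
  case (Suc k A)
  define n where "n = Suc k"
  have A: "A \<in> carrier_mat n n" and Ah: "adj A = A" using Suc.prems by (auto simp: n_def)
  have n0: "0 < n" by (simp add: n_def)
  obtain v e where v: "v \<in> carrier_vec n" and v0: "v \<noteq> 0\<^sub>v n" and Av: "A *\<^sub>v v = e \<cdot>\<^sub>v v"
    using eigen_exists[OF A] by (auto simp: n_def)
  obtain W0 c where U0: "unitary n W0" and c0: "c \<noteq> 0" and col0: "\<forall>i<n. W0 $$ (i,0) = c * v $ i"
    using unit_completion[OF v v0] by blast
  have W0: "W0 \<in> carrier_mat n n" "adj W0 * W0 = 1\<^sub>m n" "W0 * adj W0 = 1\<^sub>m n"
    using U0 unitary_right[OF U0] by (auto simp: unitary_def)
  define A' where "A' = adj W0 * A * W0"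
  have A'c: "A' \<in> carrier_mat n n" using A W0 by (simp add: A'_def)
  have A'h: "adj A' = A'"
    using A W0 Ah by (simp add: A'_def adj_mult[of _ n n _ n] assoc_mult_mat[of _ n n _ n _ n])
  have AW0: "(A * W0) $$ (t,0) = e * W0 $$ (t,0)" if t: "t < n" for t
  proof -
    have "(A * W0) $$ (t,0) = (\<Sum>s<n. A $$ (t,s) * W0 $$ (s,0))"
      using A W0 t n0 by (intro mult_entry) auto
    also have "\<dots> = c * (\<Sum>s<n. A $$ (t,s) * v $ s)"
      using col0 by (simp add: sum_distrib_left mult_ac)
    also have "(\<Sum>s<n. A $$ (t,s) * v $ s) = (A *\<^sub>v v) $ t"
      using A v t by (auto simp: scalar_prod_def intro!: sum.cong)
    also have "\<dots> = e * v $ t" using Av v t by simp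
    finally show ?thesis using col0 t by simp
  qed
  have A'col: "A' $$ (i,0) = (if i = 0 then e else 0)" if i: "i < n" for i
  proof -
    have "A' = adj W0 * (A * W0)" unfolding A'_def using A W0 by (intro assoc_mult_mat[of _ n n _ n _ n]) auto
    also have "\<dots> $$ (i,0) = (\<Sum>t<n. adj W0 $$ (i,t) * (A * W0) $$ (t,0))"
      using A W0 i n0 by (intro mult_entry[of _ n n _ n]) auto
    finally have "A' $$ (i,0) = (\<Sum>t<n. adj W0 $$ (i,t) * (A * W0) $$ (t,0))" .
    also have "\<dots> = e * (\<Sum>t<n. adj W0 $$ (i,t) * W0 $$ (t,0))"
      by (simp add: AW0 sum_distrib_left mult_ac)
    also have "(\<Sum>t<n. adj W0 $$ (i,t) * W0 $$ (t,0)) = (adj W0 * W0) $$ (i,0)"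
      using W0 i n0 by (intro mult_entry[symmetric]) auto
    finally show ?thesis using W0 i n0 by simp
  qed
  have A'row: "A' $$ (0,j) = (if j = 0 then cnj e else 0)" if j: "j < n" for j
  proof -
    have "A' $$ (0,j) = adj A' $$ (0,j)" using A'h by simp
    also have "\<dots> = cnj (A' $$ (j,0))" using A'c j n0 by simp
    finally show ?thesis using A'col[OF j] by simp
  qed
  have er: "cnj e = e" using A'row[of 0] A'col[of 0] by (simp add: n_def)
  hence ere: "e = complex_of_real (Re e)" by (simp add: complex_eq_iff)
  define A3 where "A3 = mat k k (\<lambda>(i,j). A' $$ (Suc i, Suc j))"
  have A3c: "A3 \<in> carrier_mat k k" by (simp add: A3_def)
  have A3h: "adj A3 = A3"
  proof (rule eq_matI)
    fix i j assume "i < dim_row A3" "j < dim_col A3"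
    hence ij: "i < k" "j < k" by (auto simp: A3_def)
    have "adj A3 $$ (i,j) = cnj (A' $$ (Suc j, Suc i))" using ij by (simp add: A3_def)
    also have "\<dots> = adj A' $$ (Suc i, Suc j)" using ij A'c by (simp add: n_def)
    finally show "adj A3 $$ (i,j) = A3 $$ (i,j)" using ij A'h by (simp add: A3_def)
  qed (auto simp: A3_def)
  obtain V mu where UV: "unitary k V" and A3d: "A3 = V * diagm k mu * adj V"
    using Suc.IH[OF A3c A3h] by blast
  have Vc: "V \<in> carrier_mat k k" "adj V * V = 1\<^sub>m k" using UV by (auto simp: unitary_def)
  define W2 where "W2 = mat n n (\<lambda>(i,j). if i = 0 \<and> j = 0 then 1 else if i = 0 \<or> j = 0 then 0 else V $$ (i - 1, j - 1))"
  have W2c: "W2 \<in> carrier_mat n n" by (simp add: W2_def)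
  have W2e: "W2 $$ (i,j) = (if i = 0 \<and> j = 0 then 1 else if i = 0 \<or> j = 0 then 0 else V $$ (i - 1, j - 1))"
    if "i < n" "j < n" for i j using that by (simp add: W2_def)
  have U2: "unitary n W2"
  proof -
    have "adj W2 * W2 = 1\<^sub>m n"
    proof (rule eq_matI)
      fix i j assume "i < dim_row (1\<^sub>m n)" "j < dim_col (1\<^sub>m n)"
      hence ij: "i < n" "j < n" by auto
      have "(adj W2 * W2) $$ (i,j) = (\<Sum>t<n. cnj (W2 $$ (t,i)) * W2 $$ (t,j))"
        using W2c ij by (subst mult_entry[of _ n n _ n]) auto
      also have "\<dots> = cnj (W2 $$ (0,i)) * W2 $$ (0,j) + (\<Sum>t<k. cnj (W2 $$ (Suc t,i)) * W2 $$ (Suc t,j))"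
        unfolding n_def by (rule sum_Suc_split)
      also have "\<dots> = 1\<^sub>m n $$ (i,j)"
      proof (cases "i = 0 \<or> j = 0")
        case True
        thus ?thesis using ij by (auto simp: W2e n_def)
      next
        case False
        then obtain i' j' where i': "i = Suc i'" and j': "j = Suc j'" by (cases i; cases j) auto
        have "(\<Sum>t<k. cnj (W2 $$ (Suc t,i)) * W2 $$ (Suc t,j)) = (\<Sum>t<k. cnj (V $$ (t,i')) * V $$ (t,j'))"
          using ij i' j' by (intro sum.cong refl) (simp add: W2e n_def)
        also have "\<dots> = (adj V * V) $$ (i',j')"
          using Vc ij i' j' by (subst mult_entry[of _ k k _ k]) (auto simp: n_def)
        finally show ?thesis using Vc ij i' j' by (simp add: W2e n_def)
      qed
      finally show "(adj W2 * W2) $$ (i,j) = 1\<^sub>m n $$ (i,j)" .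
    qed (use W2c in auto)
    thus ?thesis using W2c by (simp add: unitary_def)
  qed
  define l where "l i = (if i = 0 then Re e else mu (i - 1))" for i
  have A'd: "A' = W2 * diagm n l * adj W2"
  proof (rule eq_matI)
    fix i j assume "i < dim_row (W2 * diagm n l * adj W2)" "j < dim_col (W2 * diagm n l * adj W2)"
    hence ij: "i < n" "j < n" using W2c by auto
    have "(W2 * diagm n l * adj W2) $$ (i,j) = (\<Sum>t<n. W2 $$ (i,t) * complex_of_real (l t) * cnj (W2 $$ (j,t)))"
      by (rule wdw_entry[OF W2c ij])
    also have "\<dots> = W2 $$ (i,0) * complex_of_real (l 0) * cnj (W2 $$ (j,0)) +
        (\<Sum>t<k. W2 $$ (i,Suc t) * complex_of_real (l (Suc t)) * cnj (W2 $$ (j,Suc t)))"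
      unfolding n_def by (rule sum_Suc_split)
    also have "\<dots> = A' $$ (i,j)"
    proof (cases "i = 0 \<or> j = 0")
      case True
      thus ?thesis using ij A'col A'row er ere by (auto simp: W2e n_def l_def)
    next
      case False
      then obtain i' j' where i': "i = Suc i'" and j': "j = Suc j'" by (cases i; cases j) auto
      have "(\<Sum>t<k. W2 $$ (i,Suc t) * complex_of_real (l (Suc t)) * cnj (W2 $$ (j,Suc t)))
          = (\<Sum>t<k. V $$ (i',t) * complex_of_real (mu t) * cnj (V $$ (j',t)))"
        using ij i' j' by (intro sum.cong refl) (simp add: W2e n_def l_def)
      also have "\<dots> = A3 $$ (i',j')"
        unfolding A3d using Vc ij i' j' by (intro wdw_entry[symmetric]) (auto simp: n_def)
      finally show ?thesis using ij i' j' by (simp add: W2e n_def A3_def)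
    qed
    finally show "A' $$ (i,j) = (W2 * diagm n l * adj W2) $$ (i,j)" by simp
  qed (use W2c A'c in auto)
  have "A = W0 * A' * adj W0"
  proof -
    have "W0 * A' * adj W0 = (W0 * adj W0) * A * (W0 * adj W0)"
      using A W0(1) by (simp add: A'_def assoc_mult_mat[of _ n n _ n _ n])
    also have "(W0 * adj W0) * A * (W0 * adj W0) = A" unfolding W0(3) using A by simp
    finally show ?thesis by simp
  qed
  also have "\<dots> = (W0 * W2) * diagm n l * adj (W0 * W2)"
    unfolding A'd using W0 W2c by (simp add: adj_mult[of _ n n _ n] assoc_mult_mat[of _ n n _ n _ n])
  finally show ?case using unitary_mult[OF U0 U2] unfolding n_def by blast
qed



definition herm :: "nat \<Rightarrow> complex mat \<Rightarrow> bool" where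
  "herm n A \<longleftrightarrow> A \<in> carrier_mat n n \<and> adj A = A"

lemma herm_decomp: "herm n A \<Longrightarrow> \<exists>W l. unitary n W \<and> A = W * diagm n l * adj W"
  unfolding herm_def by (intro spectral) auto

lemma herm_add: "herm n A \<Longrightarrow> herm n B \<Longrightarrow> herm n (A + B)"
  unfolding herm_def by (auto simp: adj_add)

lemma herm_minus: "herm n A \<Longrightarrow> herm n B \<Longrightarrow> herm n (A - B)"
  unfolding herm_def by (auto simp: adj_minus)

lemma herm_smult: "herm n A \<Longrightarrow> herm n (complex_of_real c \<cdot>\<^sub>m A)"
  unfolding herm_def by (auto simp: adj_smult_real)

lemma tri_self: "z * complex_of_real r * cnj z = complex_of_real (r * (cmod z)^2)"
proof -
  have "z * complex_of_real r * cnj z = complex_of_real r * (cnj z * z)" by (simp add: mult_ac)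
  also have "\<dots> = complex_of_real r * complex_of_real ((cmod z)^2)" by (simp only: cnj_mult_self)
  finally show ?thesis by simp
qed

lemma conj_by_unitary:
  assumes UW: "unitary n W" and UY: "unitary n Y"
  shows "adj W * (Y * diagm n mu * adj Y) * W = (adj W * Y) * diagm n mu * adj (adj W * Y)"
proof -
  have W: "W \<in> carrier_mat n n" and Y: "Y \<in> carrier_mat n n" using UW UY by (auto simp: unitary_def)
  have "adj (adj W * Y) = adj Y * W" using W Y by (simp add: adj_mult[of _ n n _ n])
  thus ?thesis using W Y by (simp add: assoc_mult_mat[of _ n n _ n _ n])
qed

lemma col_norm:
  assumes U: "unitary n V" and j: "j < n"
  shows "(\<Sum>k<n. (cmod (V $$ (k,j)))^2) = 1"
proof -
  have V: "V \<in> carrier_mat n n" "adj V * V = 1\<^sub>m n" using U by (auto simp: unitary_def)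
  have "complex_of_real (\<Sum>k<n. (cmod (V $$ (k,j)))^2) = (\<Sum>k<n. cnj (V $$ (k,j)) * V $$ (k,j))"
    by (simp add: cnj_mult_self)
  also have "\<dots> = (adj V * V) $$ (j,j)"
    using V j by (subst mult_entry[of _ n n _ n]) auto
  also have "\<dots> = 1" using V j by simp
  finally show ?thesis by (metis of_real_eq_1_iff)
qed

lemma diag_bound:
  assumes UW: "unitary n W" and UY: "unitary n Y" and s: "\<forall>k<n. \<bar>s k\<bar> \<le> 1"
  shows "(\<Sum>k<n. s k * Re ((adj W * (Y * diagm n mu * adj Y) * W) $$ (k,k))) \<le> (\<Sum>j<n. \<bar>mu j\<bar>)"
proof -
  define V where "V = adj W * Y"
  have UV: "unitary n V" unfolding V_def by (intro unitary_mult unitary_adj UW UY)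
  have Vc: "V \<in> carrier_mat n n" using UV by (simp add: unitary_def)
  have e: "Re ((adj W * (Y * diagm n mu * adj Y) * W) $$ (k,k)) = (\<Sum>j<n. mu j * (cmod (V $$ (k,j)))^2)"
    if k: "k < n" for k
  proof -
    have "(adj W * (Y * diagm n mu * adj Y) * W) $$ (k,k) = (\<Sum>j<n. V $$ (k,j) * complex_of_real (mu j) * cnj (V $$ (k,j)))"
      unfolding conj_by_unitary[OF UW UY] V_def[symmetric] by (rule wdw_entry[OF Vc k k])
    also have "\<dots> = (\<Sum>j<n. complex_of_real (mu j * (cmod (V $$ (k,j)))^2))"
      by (intro sum.cong refl) (simp only: tri_self)
    finally show ?thesis by (simp only: Re_sum Re_complex_of_real)
  qed
  have "(\<Sum>k<n. s k * Re ((adj W * (Y * diagm n mu * adj Y) * W) $$ (k,k)))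
      = (\<Sum>k<n. \<Sum>j<n. s k * (mu j * (cmod (V $$ (k,j)))^2))"
    by (intro sum.cong refl) (simp add: e sum_distrib_left)
  also have "\<dots> \<le> (\<Sum>k<n. \<Sum>j<n. \<bar>mu j\<bar> * (cmod (V $$ (k,j)))^2)"
  proof (intro sum_mono)
    fix k j assume k: "k \<in> {..<n}"
    have sk: "\<bar>s k\<bar> \<le> 1" using s k by simp
    have "s k * (mu j * (cmod (V $$ (k,j)))^2) \<le> \<bar>s k * mu j\<bar> * (cmod (V $$ (k,j)))^2"
      by (simp add: mult.assoc[symmetric] mult_right_mono)
    also have "\<dots> \<le> \<bar>mu j\<bar> * (cmod (V $$ (k,j)))^2"
      using sk by (intro mult_right_mono) (auto simp: abs_mult mult_left_le_one_le)
    finally show "s k * (mu j * (cmod (V $$ (k,j)))^2) \<le> \<bar>mu j\<bar> * (cmod (V $$ (k,j)))^2" .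
  qed
  also have "\<dots> = (\<Sum>j<n. \<bar>mu j\<bar> * (\<Sum>k<n. (cmod (V $$ (k,j)))^2))"
    by (subst sum.swap) (simp add: sum_distrib_left)
  also have "\<dots> = (\<Sum>j<n. \<bar>mu j\<bar>)"
    by (intro sum.cong refl) (simp add: col_norm[OF UV])
  finally show ?thesis .
qed

lemma unitary_diag_back:
  assumes U: "unitary n W"
  shows "adj W * (W * diagm n l * adj W) * W = diagm n l"
proof -
  have W: "W \<in> carrier_mat n n" using U by (simp add: unitary_def)
  have "adj W * (W * diagm n l * adj W) * W = (adj W * W) * diagm n l * (adj W * W)"
    using W by (simp add: assoc_mult_mat[of _ n n _ n _ n])
  also have "\<dots> = diagm n l" using U by (simp add: unitary_def)
  finally show ?thesis .
qed

lemma tn_triangle: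
  assumes A: "herm n A" and B: "herm n B"
  shows "trace_norm (A + B) \<le> trace_norm A + trace_norm B"
proof -
  obtain W l where UW: "unitary n W" and AB: "A + B = W * diagm n l * adj W"
    using herm_decomp[OF herm_add[OF A B]] by blast
  obtain Y mu where UY: "unitary n Y" and Ad: "A = Y * diagm n mu * adj Y"
    using herm_decomp[OF A] by blast
  obtain Z nu where UZ: "unitary n Z" and Bd: "B = Z * diagm n nu * adj Z"
    using herm_decomp[OF B] by blast
  have Wc: "W \<in> carrier_mat n n" using UW by (simp add: unitary_def)
  have Ac: "A \<in> carrier_mat n n" and Bc: "B \<in> carrier_mat n n" using A B by (auto simp: herm_def)
  define s where "s k = sgn (l k)" for k
  have s1: "\<forall>k<n. \<bar>s k\<bar> \<le> 1" by (auto simp: s_def sgn_if)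
  have lk: "l k = Re ((adj W * A * W) $$ (k,k)) + Re ((adj W * B * W) $$ (k,k))" if k: "k < n" for k
  proof -
    have "adj W * (A + B) * W = adj W * A * W + adj W * B * W"
      using Wc Ac Bc by (simp add: mult_add_distrib_mat[of _ n n] add_mult_distrib_mat[of _ n n])
    hence "(adj W * (A + B) * W) $$ (k,k) = (adj W * A * W) $$ (k,k) + (adj W * B * W) $$ (k,k)"
      using Wc Ac k by simp
    moreover have "(adj W * (A + B) * W) $$ (k,k) = complex_of_real (l k)"
      unfolding AB unitary_diag_back[OF UW] using k by simp
    ultimately show ?thesis by (metis Re_complex_of_real plus_complex.sel(1))
  qed
  have "trace_norm (A + B) = (\<Sum>k<n. \<bar>l k\<bar>)" by (rule trace_norm_herm[OF UW AB])
  also have "\<dots> = (\<Sum>k<n. s k * l k)" by (intro sum.cong refl) (simp add: s_def abs_sgn)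
  also have "\<dots> = (\<Sum>k<n. s k * Re ((adj W * A * W) $$ (k,k))) + (\<Sum>k<n. s k * Re ((adj W * B * W) $$ (k,k)))"
    by (simp add: lk distrib_left sum.distrib)
  also have "\<dots> \<le> (\<Sum>j<n. \<bar>mu j\<bar>) + (\<Sum>j<n. \<bar>nu j\<bar>)"
    using diag_bound[OF UW UY s1, of mu] diag_bound[OF UW UZ s1, of nu] Ad Bd by (intro add_mono) auto
  also have "\<dots> = trace_norm A + trace_norm B"
    using trace_norm_herm[OF UY Ad] trace_norm_herm[OF UZ Bd] by simp
  finally show ?thesis .
qed

lemma tn_smult:
  assumes A: "herm n A"
  shows "trace_norm (complex_of_real c \<cdot>\<^sub>m A) = \<bar>c\<bar> * trace_norm A"
proof -
  obtain W l where UW: "unitary n W" and Ad: "A = W * diagm n l * adj W"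
    using herm_decomp[OF A] by blast
  have Wc: "W \<in> carrier_mat n n" using UW by (simp add: unitary_def)
  have "complex_of_real c \<cdot>\<^sub>m A = W * diagm n (\<lambda>k. c * l k) * adj W"
  proof (rule eq_matI)
    fix i j assume "i < dim_row (W * diagm n (\<lambda>k. c * l k) * adj W)" "j < dim_col (W * diagm n (\<lambda>k. c * l k) * adj W)"
    hence ij: "i < n" "j < n" using Wc by auto
    show "(complex_of_real c \<cdot>\<^sub>m A) $$ (i,j) = (W * diagm n (\<lambda>k. c * l k) * adj W) $$ (i,j)"
      using ij Wc unfolding Ad
      by (simp add: wdw_entry sum_distrib_left mult_ac)
  qed (use Wc Ad in auto)
  hence "trace_norm (complex_of_real c \<cdot>\<^sub>m A) = (\<Sum>k<n. \<bar>c * l k\<bar>)" by (rule trace_norm_herm[OF UW])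
  also have "\<dots> = \<bar>c\<bar> * (\<Sum>k<n. \<bar>l k\<bar>)" by (simp add: abs_mult sum_distrib_left)
  finally show ?thesis using trace_norm_herm[OF UW Ad] by simp
qed



lemma bs_eq: "bitstrings k = {xs. set xs \<subseteq> (UNIV::bool set) \<and> length xs = k}"
  by (auto simp: bitstrings_def)

lemma bs_finite[simp]: "finite (bitstrings k)"
  unfolding bs_eq by (rule finite_lists_length_eq) simp

lemma bs_card: "card (bitstrings k) = 2 ^ k"
  unfolding bs_eq by (subst card_lists_length_eq) (auto simp: card_UNIV_bool)

lemma btn_bound: "bits_to_nat z < 2 ^ length z"
  by (induction z) auto

lemma btn_inj: "length x = length y \<Longrightarrow> bits_to_nat x = bits_to_nat y \<Longrightarrow> x = y"
proof (induction x arbitrary: y)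
  case Nil thus ?case by simp
next
  case (Cons a x y)
  then obtain b y' where y: "y = b # y'" and len: "length x = length y'" by (cases y) auto
  have bx: "bits_to_nat x < 2 ^ length x" and by': "bits_to_nat y' < 2 ^ length x"
    using btn_bound[of x] btn_bound[of y'] len by auto
  have eq: "(if a then 2 ^ length x else 0) + bits_to_nat x = (if b then 2 ^ length x else 0) + bits_to_nat y'"
    using Cons.prems y len by simp
  have ab: "a = b"
  proof (rule ccontr)
    assume "a \<noteq> b"
    thus False using eq bx by' by (cases a; cases b) auto
  qed
  hence "bits_to_nat x = bits_to_nat y'" using eq by simp
  with Cons.IH[OF len] ab y show ?case by simp
qed

lemma btn_bij: "bij_betw bits_to_nat (bitstrings k) {..<2^k}"
proof -
  have inj: "inj_on bits_to_nat (bitstrings k)"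
    by (auto intro!: inj_onI btn_inj simp: bitstrings_def)
  have sub: "bits_to_nat ` bitstrings k \<subseteq> {..<2^k}"
    using btn_bound by (auto simp: bitstrings_def)
  have "card (bits_to_nat ` bitstrings k) = card {..<(2::nat)^k}"
    using card_image[OF inj] by (simp add: bs_card)
  hence "bits_to_nat ` bitstrings k = {..<2^k}"
    using sub by (intro card_subset_eq) auto
  thus ?thesis using inj by (simp add: bij_betw_def)
qed

lemma ntb_btn: "z \<in> bitstrings k \<Longrightarrow> nat_to_bits k (bits_to_nat z) = z"
  unfolding nat_to_bits_def
  by (rule the_equality) (auto simp: bitstrings_def intro: btn_inj)

lemma sum_ntb: "(\<Sum>j<2^k. f (nat_to_bits k j)) = (\<Sum>x\<in>bitstrings k. f x)"
proof -
  have "(\<Sum>x\<in>bitstrings k. f (nat_to_bits k (bits_to_nat x))) = (\<Sum>j<2^k. f (nat_to_bits k j))"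
    by (rule sum.reindex_bij_betw[OF btn_bij])
  moreover have "(\<Sum>x\<in>bitstrings k. f (nat_to_bits k (bits_to_nat x))) = (\<Sum>x\<in>bitstrings k. f x)"
    by (intro sum.cong refl) (simp add: ntb_btn)
  ultimately show ?thesis by simp
qed

lemma sum_add_chunk: "(\<Sum>t<(a::nat) + d. g t) = (\<Sum>t<a. g t) + (\<Sum>b<d. g (a + b))"
  by (induction d) (auto simp: add.assoc)

lemma sum_blocks: "(\<Sum>t<(N::nat) * d. g t) = (\<Sum>j<N. \<Sum>a<d. g (j * d + a))"
proof (induction N)
  case 0 thus ?case by simp
next
  case (Suc N)
  have "(\<Sum>t<Suc N * d. g t) = (\<Sum>t<N * d + d. g t)" by (simp add: add.commute)
  also have "\<dots> = (\<Sum>t<N * d. g t) + (\<Sum>a<d. g (N * d + a))" by (rule sum_add_chunk)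
  finally show ?case using Suc.IH by simp
qed

lemma sum_delta_lt: "j0 < (N::nat) \<Longrightarrow> (\<Sum>j<N. if j = j0 then X j else 0) = X j0"
  by (simp add: sum.delta)

definition bdiag :: "nat \<Rightarrow> nat \<Rightarrow> (nat \<Rightarrow> complex mat) \<Rightarrow> complex mat" where
  "bdiag N d G = mat (N * d) (N * d) (\<lambda>(r,c). if r div d = c div d then G (r div d) $$ (r mod d, c mod d) else 0)"

lemma bdiag_carrier[simp]: "bdiag N d G \<in> carrier_mat (N*d) (N*d)"
  "dim_row (bdiag N d G) = N * d" "dim_col (bdiag N d G) = N * d"
  by (simp_all add: bdiag_def)

lemma bdiag_index: "r < N * d \<Longrightarrow> c < N * d \<Longrightarrow>
   bdiag N d G $$ (r,c) = (if r div d = c div d then G (r div d) $$ (r mod d, c mod d) else 0)"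
  by (simp add: bdiag_def)

lemma div_lt: "(r::nat) < N * d \<Longrightarrow> r div d < N"
  by (metis less_mult_imp_div_less)

lemma bdiag_mult:
  assumes d: "d > 0" and F: "\<forall>j<N. F j \<in> carrier_mat d d" and G: "\<forall>j<N. G j \<in> carrier_mat d d"
  shows "bdiag N d F * bdiag N d G = bdiag N d (\<lambda>j. F j * G j)"
proof (rule eq_matI)
  fix r c assume "r < dim_row (bdiag N d (\<lambda>j. F j * G j))" "c < dim_col (bdiag N d (\<lambda>j. F j * G j))"
  hence rc: "r < N * d" "c < N * d" by auto
  have jr: "r div d < N" and jc: "c div d < N" using rc div_lt by auto
  have "(bdiag N d F * bdiag N d G) $$ (r,c) = (\<Sum>t<N*d. bdiag N d F $$ (r,t) * bdiag N d G $$ (t,c))"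
    using rc by (intro mult_entry) auto
  also have "\<dots> = (\<Sum>j<N. \<Sum>a<d. bdiag N d F $$ (r,j*d+a) * bdiag N d G $$ (j*d+a,c))"
    by (rule sum_blocks)
  also have "\<dots> = (\<Sum>j<N. if j = r div d then (\<Sum>a<d. (if r div d = c div d then F j $$ (r mod d, a) * G j $$ (a, c mod d) else 0)) else 0)"
  proof (intro sum.cong refl)
    fix j assume j: "j \<in> {..<N}"
    have jd: "j * d + a < N * d" if "a < d" for a
    proof -
      have "j * d + a < j * d + d" using that by simp
      also have "\<dots> = Suc j * d" by simp
      also have "\<dots> \<le> N * d" using j by (intro mult_right_mono) auto
      finally show ?thesis .
    qed
    have dv: "(j * d + a) div d = j" "(j * d + a) mod d = a" if "a < d" for a
      using that d by auto
    show "(\<Sum>a<d. bdiag N d F $$ (r,j*d+a) * bdiag N d G $$ (j*d+a,c)) =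
      (if j = r div d then (\<Sum>a<d. (if r div d = c div d then F j $$ (r mod d, a) * G j $$ (a, c mod d) else 0)) else 0)"
      using rc jd dv by (auto simp: bdiag_index intro!: sum.cong)
  qed
  also have "\<dots> = (\<Sum>a<d. (if r div d = c div d then F (r div d) $$ (r mod d, a) * G (r div d) $$ (a, c mod d) else 0))"
    by (rule sum_delta_lt[OF jr])
  also have "\<dots> = bdiag N d (\<lambda>j. F j * G j) $$ (r,c)"
  proof (cases "r div d = c div d")
    case True
    have "(F (r div d) * G (r div d)) $$ (r mod d, c mod d) = (\<Sum>a<d. F (r div d) $$ (r mod d, a) * G (r div d) $$ (a, c mod d))"
      using F G jr d by (intro mult_entry) auto
    thus ?thesis using True rc by (simp add: bdiag_index)
  qed (use rc in \<open>simp add: bdiag_index\<close>)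
  finally show "(bdiag N d F * bdiag N d G) $$ (r,c) = bdiag N d (\<lambda>j. F j * G j) $$ (r,c)" .
qed auto

lemma bdiag_adj: "adj (bdiag N d F) = bdiag N d (\<lambda>j. adj (F j))" if "\<forall>j<N. F j \<in> carrier_mat d d" "d > 0"
proof (rule eq_matI)
  fix r c assume "r < dim_row (bdiag N d (\<lambda>j. adj (F j)))" "c < dim_col (bdiag N d (\<lambda>j. adj (F j)))"
  hence rc: "r < N * d" "c < N * d" by auto
  have "r div d < N" using rc div_lt by auto
  thus "adj (bdiag N d F) $$ (r,c) = bdiag N d (\<lambda>j. adj (F j)) $$ (r,c)"
    using rc that by (auto simp: bdiag_index)
qed auto

lemma bdiag_one: "d > 0 \<Longrightarrow> bdiag N d (\<lambda>j. 1\<^sub>m d) = 1\<^sub>m (N * d)"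
proof (rule eq_matI)
  fix r c assume "d > 0" "r < dim_row (1\<^sub>m (N * d))" "c < dim_col (1\<^sub>m (N * d))"
  thus "bdiag N d (\<lambda>j. 1\<^sub>m d) $$ (r,c) = 1\<^sub>m (N * d) $$ (r,c)"
    by (auto simp: bdiag_index) (metis div_mult_mod_eq)
qed auto

lemma bdiag_diagm: "d > 0 \<Longrightarrow> bdiag N d (\<lambda>j. diagm d (lf j)) = diagm (N * d) (\<lambda>r. lf (r div d) (r mod d))"
proof (rule eq_matI)
  fix r c assume "d > 0" "r < dim_row (diagm (N * d) (\<lambda>r. lf (r div d) (r mod d)))" "c < dim_col (diagm (N * d) (\<lambda>r. lf (r div d) (r mod d)))"
  thus "bdiag N d (\<lambda>j. diagm d (lf j)) $$ (r,c) = diagm (N * d) (\<lambda>r. lf (r div d) (r mod d)) $$ (r,c)"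
    by (auto simp: bdiag_index) (metis div_mult_mod_eq)
qed auto

lemma bdiag_cong: "(\<And>j. j < N \<Longrightarrow> F j = G j) \<Longrightarrow> bdiag N d F = bdiag N d G"
  unfolding bdiag_def by (intro eq_matI) (auto simp: div_lt)

lemma cq_bdiag: "cq_op k d F = bdiag (2^k) d (\<lambda>j. F (nat_to_bits k j))"
  by (simp add: cq_op_def bdiag_def)

lemma tn_bdiag:
  assumes d: "d > 0" and G: "\<forall>j<N. herm d (G j)"
  shows "trace_norm (bdiag N d G) = (\<Sum>j<N. trace_norm (G j))"
proof -
  have "\<forall>j\<in>{..<N}. \<exists>p. unitary d (fst p) \<and> G j = fst p * diagm d (snd p) * adj (fst p)"
    using G herm_decomp by fastforce
  then obtain P where P: "\<forall>j\<in>{..<N}. unitary d (fst (P j)) \<and> G j = fst (P j) * diagm d (snd (P j)) * adj (fst (P j))"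
    by (metis bchoice)
  define Wf where "Wf j = fst (P j)" for j
  define lf where "lf j = snd (P j)" for j
  have UW: "unitary d (Wf j)" and Gd: "G j = Wf j * diagm d (lf j) * adj (Wf j)" if "j < N" for j
    using P that by (auto simp: Wf_def lf_def)
  have Wc: "Wf j \<in> carrier_mat d d" if "j < N" for j using UW[OF that] by (simp add: unitary_def)
  define BW where "BW = bdiag N d Wf"
  define BL where "BL r = lf (r div d) (r mod d)" for r
  have adjBW: "adj BW = bdiag N d (\<lambda>j. adj (Wf j))" unfolding BW_def using Wc d by (intro bdiag_adj) auto
  have UB: "unitary (N * d) BW"
  proof -
    have "adj BW * BW = bdiag N d (\<lambda>j. adj (Wf j) * Wf j)"
      unfolding adjBW unfolding BW_def using Wc d by (intro bdiag_mult) auto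
    also have "\<dots> = bdiag N d (\<lambda>j. 1\<^sub>m d)" using UW by (intro bdiag_cong) (simp add: unitary_def)
    also have "\<dots> = 1\<^sub>m (N * d)" using d by (rule bdiag_one)
    finally show ?thesis by (simp add: unitary_def BW_def)
  qed
  have dec: "bdiag N d G = BW * diagm (N * d) BL * adj BW"
  proof -
    have "BW * diagm (N * d) BL = bdiag N d (\<lambda>j. Wf j * diagm d (lf j))"
      unfolding BW_def BL_def bdiag_diagm[OF d, symmetric] using Wc d by (intro bdiag_mult) auto
    hence "BW * diagm (N * d) BL * adj BW = bdiag N d (\<lambda>j. Wf j * diagm d (lf j) * adj (Wf j))"
      unfolding adjBW using Wc d by (auto intro!: bdiag_mult)
    also have "\<dots> = bdiag N d G" using Gd by (intro bdiag_cong) auto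
    finally show ?thesis by simp
  qed
  have "trace_norm (bdiag N d G) = (\<Sum>r<N*d. \<bar>BL r\<bar>)" by (rule trace_norm_herm[OF UB dec])
  also have "\<dots> = (\<Sum>j<N. \<Sum>a<d. \<bar>BL (j * d + a)\<bar>)" by (rule sum_blocks)
  also have "\<dots> = (\<Sum>j<N. trace_norm (G j))"
  proof (intro sum.cong refl)
    fix j assume j: "j \<in> {..<N}"
    have "(\<Sum>a<d. \<bar>BL (j * d + a)\<bar>) = (\<Sum>a<d. \<bar>lf j a\<bar>)"
      using d by (intro sum.cong refl) (simp add: BL_def)
    also have "\<dots> = trace_norm (G j)" using trace_norm_herm[OF UW Gd] j by simp
    finally show "(\<Sum>a<d. \<bar>BL (j * d + a)\<bar>) = trace_norm (G j)" .
  qed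
  finally show ?thesis .
qed

lemma tn_cq:
  assumes d: "d > 0" and F: "\<forall>x\<in>bitstrings k. herm d (F x)"
  shows "trace_norm (cq_op k d F) = (\<Sum>x\<in>bitstrings k. trace_norm (F x))"
proof -
  have "\<forall>j<2^k. herm d (F (nat_to_bits k j))"
  proof (intro allI impI)
    fix j :: nat assume j: "j < 2^k"
    have "j \<in> bits_to_nat ` bitstrings k" using j btn_bij[of k] by (simp add: bij_betw_def)
    then obtain z where z: "z \<in> bitstrings k" "bits_to_nat z = j" by blast
    hence "nat_to_bits k j = z" using ntb_btn by blast
    thus "herm d (F (nat_to_bits k j))" using F z by simp
  qed
  hence "trace_norm (cq_op k d F) = (\<Sum>j<2^k. trace_norm (F (nat_to_bits k j)))"
    unfolding cq_bdiag using d by (intro tn_bdiag) auto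
  also have "\<dots> = (\<Sum>x\<in>bitstrings k. trace_norm (F x))" by (rule sum_ntb)
  finally show ?thesis .
qed

lemma sum_take:
  fixes g :: "bool list \<Rightarrow> real"
  assumes j: "j \<le> m"
  shows "(\<Sum>z\<in>bitstrings m. g (take j z)) = 2^(m-j) * (\<Sum>y\<in>bitstrings j. g y)"
proof -
  have bij: "bij_betw (\<lambda>(y,u). y @ u) (bitstrings j \<times> bitstrings (m-j)) (bitstrings m)"
  proof (rule bij_betw_imageI)
    show "inj_on (\<lambda>(y,u). y @ u) (bitstrings j \<times> bitstrings (m-j))"
    proof (rule inj_onI)
      fix p q assume p: "p \<in> bitstrings j \<times> bitstrings (m-j)" and q: "q \<in> bitstrings j \<times> bitstrings (m-j)"
        and e: "(\<lambda>(y,u). y @ u) p = (\<lambda>(y,u). y @ u) q"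
      obtain a b where ab: "p = (a,b)" by (cases p)
      obtain c c' where cd: "q = (c,c')" by (cases q)
      have la: "length a = length c" using p q ab cd by (simp add: bitstrings_def)
      have "a @ b = c @ c'" using e ab cd by simp
      hence "a = c \<and> b = c'" using la by simp
      thus "p = q" using ab cd by simp
    qed
    show "(\<lambda>(y,u). y @ u) ` (bitstrings j \<times> bitstrings (m-j)) = bitstrings m"
    proof
      show "(\<lambda>(y,u). y @ u) ` (bitstrings j \<times> bitstrings (m-j)) \<subseteq> bitstrings m"
        using j by (auto simp: bitstrings_def)
      show "bitstrings m \<subseteq> (\<lambda>(y,u). y @ u) ` (bitstrings j \<times> bitstrings (m-j))"
      proof
        fix z assume z: "z \<in> bitstrings m"
        hence "(take j z, drop j z) \<in> bitstrings j \<times> bitstrings (m-j)" using j by (auto simp: bitstrings_def)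
        thus "z \<in> (\<lambda>(y,u). y @ u) ` (bitstrings j \<times> bitstrings (m-j))"
          by (metis (no_types, lifting) append_take_drop_id case_prod_conv image_eqI)
      qed
    qed
  qed
  have "(\<Sum>z\<in>bitstrings m. g (take j z)) = (\<Sum>p\<in>bitstrings j \<times> bitstrings (m-j). g (take j ((\<lambda>(y,u). y @ u) p)))"
    by (rule sum.reindex_bij_betw[OF bij, symmetric])
  also have "\<dots> = (\<Sum>p\<in>bitstrings j \<times> bitstrings (m-j). g (fst p))"
    by (intro sum.cong refl) (auto simp: bitstrings_def)
  also have "\<dots> = (\<Sum>y\<in>bitstrings j. \<Sum>u\<in>bitstrings (m-j). g y)"
    unfolding sum.cartesian_product by (simp add: case_prod_beta')
  also have "\<dots> = (\<Sum>y\<in>bitstrings j. 2^(m-j) * g y)" by (simp add: bs_card)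
  finally show ?thesis by (simp add: sum_distrib_left)
qed



lemma wsum_carrier[simp]: "wsum d S w M \<in> carrier_mat d d"
  "dim_row (wsum d S w M) = d" "dim_col (wsum d S w M) = d"
  by (simp_all add: wsum_def)

lemma wsum_index: "i < d \<Longrightarrow> j < d \<Longrightarrow> wsum d S w M $$ (i,j) = (\<Sum>z\<in>S. complex_of_real (w z) * M z $$ (i,j))"
  by (simp add: wsum_def)

lemma wsum_cong: "(\<And>z. z \<in> S \<Longrightarrow> w z = w' z) \<Longrightarrow> wsum d S w M = wsum d S w' M"
  unfolding wsum_def by (intro eq_matI) (auto intro!: sum.cong)

lemma wsum_herm:
  assumes "\<forall>z\<in>S. herm d (M z)"
  shows "herm d (wsum d S w M)"
proof -
  have "adj (wsum d S w M) = wsum d S w M"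
  proof (rule eq_matI)
    fix i j assume "i < dim_row (wsum d S w M)" "j < dim_col (wsum d S w M)"
    hence ij: "i < d" "j < d" by auto
    have e: "cnj (M z $$ (j,i)) = M z $$ (i,j)" if "z \<in> S" for z
    proof -
      have "M z \<in> carrier_mat d d" "adj (M z) = M z" using assms that by (auto simp: herm_def)
      hence "adj (M z) $$ (i,j) = M z $$ (i,j)" by simp
      thus ?thesis using ij \<open>M z \<in> carrier_mat d d\<close> by simp
    qed
    show "adj (wsum d S w M) $$ (i,j) = wsum d S w M $$ (i,j)"
      using ij by (simp add: wsum_index e)
  qed auto
  thus ?thesis by (simp add: herm_def)
qed

lemma wsum_diff: "wsum d S w M - wsum d S w' M = wsum d S (\<lambda>z. w z - w' z) M"
  unfolding wsum_def by (intro eq_matI) (auto simp: sum_subtractf left_diff_distrib)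

lemma wsum_add: "wsum d S w M + wsum d S w' M = wsum d S (\<lambda>z. w z + w' z) M"
  unfolding wsum_def by (intro eq_matI) (auto simp: sum.distrib distrib_right)

lemma wsum_smult: "complex_of_real c \<cdot>\<^sub>m wsum d S w M = wsum d S (\<lambda>z. c * w z) M"
  unfolding wsum_def by (intro eq_matI) (auto simp: sum_distrib_left mult_ac)

lemma wsum_restrict:
  assumes "T \<subseteq> S" "finite S"
  shows "wsum d T w M = wsum d S (\<lambda>z. if z \<in> T then w z else 0) M"
proof -
  have "(\<Sum>z\<in>T. complex_of_real (w z) * M z $$ (i,j)) =
        (\<Sum>z\<in>S. complex_of_real (if z \<in> T then w z else 0) * M z $$ (i,j))" for i j
  proof -
    have "(\<Sum>z\<in>S. complex_of_real (if z \<in> T then w z else 0) * M z $$ (i,j)) =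
          (\<Sum>z\<in>S. if z \<in> T then complex_of_real (w z) * M z $$ (i,j) else 0)"
      by (intro sum.cong refl) auto
    also have "\<dots> = (\<Sum>z\<in>S \<inter> T. complex_of_real (w z) * M z $$ (i,j))"
      using assms(2) by (simp add: sum.inter_restrict)
    also have "S \<inter> T = T" using assms(1) by blast
    finally show ?thesis by simp
  qed
  thus ?thesis unfolding wsum_def by (intro eq_matI) auto
qed

lemma cq_minus:
  assumes d: "d > 0" and F: "\<forall>x. F x \<in> carrier_mat d d" and G: "\<forall>x. G x \<in> carrier_mat d d"
  shows "cq_op k d F - cq_op k d G = cq_op k d (\<lambda>x. F x - G x)"
proof (rule eq_matI)
  fix i j assume "i < dim_row (cq_op k d (\<lambda>x. F x - G x))" "j < dim_col (cq_op k d (\<lambda>x. F x - G x))"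
  hence ij: "i < 2^k * d" "j < 2^k * d" by (auto simp: cq_op_def)
  define x where "x = nat_to_bits k (j div d)"
  have Fx: "dim_row (G x) = d" "dim_col (G x) = d" using G by auto
  have m: "i mod d < d" "j mod d < d" using d by auto
  show "(cq_op k d F - cq_op k d G) $$ (i,j) = cq_op k d (\<lambda>x. F x - G x) $$ (i,j)"
    using ij Fx m by (simp add: cq_op_def x_def)
qed (auto simp: cq_op_def)

lemma tn_zero_weights: "herm d (wsum d S w M) \<Longrightarrow> trace_norm (wsum d S (\<lambda>z. 0) M) = 0"
  using tn_smult[of d "wsum d S w M" 0] wsum_smult[of 0 d S w M] by simp

theorem mainTheorem12:
  fixes m d :: nat and p :: "bool list \<Rightarrow> real" and \<rho> :: "bool list \<Rightarrow> complex mat"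
    and \<epsilon> :: real
  assumes m_pos: "m \<ge> 1"
    and p_nonneg: "\<forall>z \<in> bitstrings m. p z \<ge> 0"
    and p_sum: "(\<Sum>z \<in> bitstrings m. p z) = 1"
    and dens: "\<forall>z \<in> bitstrings m. density_op d (\<rho> z)"
    and far: "trace_norm
       (cq_op m d (\<lambda>z. wsum d {z} p \<rho>)
        - cq_op m d (\<lambda>_. wsum d (bitstrings m) (\<lambda>z. p z / 2 ^ m) \<rho>)) > \<epsilon>"
  shows "\<exists>i \<in> {1..m}. trace_norm
       (cq_op (i - 1) d (\<lambda>y.
           wsum d {z \<in> bitstrings m. take (i - 1) z = y \<and> \<not> z ! (i - 1)} p \<rho>
         - wsum d {z \<in> bitstrings m. take (i - 1) z = y \<and> z ! (i - 1)} p \<rho>)) > \<epsilon> / m"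
proof -
  define B where "B = bitstrings m"
  have finB: "finite B" by (simp add: B_def)
  have rho_h: "\<forall>z\<in>B. herm d (\<rho> z)" using dens by (auto simp: B_def density_op_def psd_def herm_def)
  have d0: "d > 0"
  proof (rule ccontr)
    assume "\<not> d > 0" hence d: "d = 0" by simp
    have "replicate m False \<in> bitstrings m" by (simp add: bitstrings_def)
    hence "mtrace (\<rho> (replicate m False)) = 1" "\<rho> (replicate m False) \<in> carrier_mat d d"
      using dens by (auto simp: density_op_def psd_def)
    thus False using d by (simp add: mtrace_def)
  qed
  have Wh: "herm d (wsum d S w \<rho>)" if "S \<subseteq> B" for S w using rho_h that by (intro wsum_herm) auto
  define hw where "hw i z z' = (if take i z' = take i z then p z' / 2^(m-i) else 0)" for i z z'
  define Dl where "Dl i z = wsum d B (\<lambda>z'. hw i z z' - hw (i-1) z z') \<rho>" for i z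
  define El where "El k z = wsum d B (\<lambda>z'. hw k z z' - hw 0 z z') \<rho>" for k z
  define Dm where "Dm i y = wsum d {z\<in>bitstrings m. take (i-1) z = y \<and> \<not> z!(i-1)} p \<rho> - wsum d {z\<in>bitstrings m. take (i-1) z = y \<and> z!(i-1)} p \<rho>" for i y
  define T where "T i = trace_norm (cq_op (i-1) d (Dm i))" for i
  have Dmh: "herm d (Dm i y)" for i y
    unfolding Dm_def by (intro herm_minus Wh) (auto simp: B_def)
  have Elh: "herm d (El k z)" for k z unfolding El_def by (rule Wh) simp
  have Dlh: "herm d (Dl i z)" for i z unfolding Dl_def by (rule Wh) simp
  have far_eq: "trace_norm (cq_op m d (\<lambda>z. wsum d {z} p \<rho>) - cq_op m d (\<lambda>_. wsum d (bitstrings m) (\<lambda>z. p z / 2 ^ m) \<rho>))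
      = (\<Sum>z\<in>B. trace_norm (El m z))"
  proof -
    have "cq_op m d (\<lambda>z. wsum d {z} p \<rho>) - cq_op m d (\<lambda>_. wsum d (bitstrings m) (\<lambda>z. p z / 2 ^ m) \<rho>)
        = cq_op m d (\<lambda>z. wsum d {z} p \<rho> - wsum d (bitstrings m) (\<lambda>z. p z / 2 ^ m) \<rho>)"
      using d0 by (intro cq_minus) auto
    also have "trace_norm \<dots> = (\<Sum>z\<in>bitstrings m. trace_norm (wsum d {z} p \<rho> - wsum d (bitstrings m) (\<lambda>z. p z / 2 ^ m) \<rho>))"
      using d0 by (intro tn_cq) (auto intro!: herm_minus Wh simp: B_def)
    also have "\<dots> = (\<Sum>z\<in>B. trace_norm (El m z))"
    proof (intro sum.cong)
      fix z assume z: "z \<in> B"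
      have lz: "length z = m" using z by (simp add: B_def bitstrings_def)
      have "wsum d {z} p \<rho> = wsum d B (\<lambda>z'. if z' \<in> {z} then p z' else 0) \<rho>"
        using z finB by (intro wsum_restrict) auto
      also have "\<dots> = wsum d B (hw m z) \<rho>"
        using lz by (intro wsum_cong) (auto simp: hw_def B_def bitstrings_def)
      finally have 1: "wsum d {z} p \<rho> = wsum d B (hw m z) \<rho>" .
      have 2: "wsum d (bitstrings m) (\<lambda>z. p z / 2 ^ m) \<rho> = wsum d B (hw 0 z) \<rho>"
        unfolding B_def by (intro wsum_cong) (simp add: hw_def)
      show "trace_norm (wsum d {z} p \<rho> - wsum d (bitstrings m) (\<lambda>z. p z / 2 ^ m) \<rho>) = trace_norm (El m z)"
        unfolding 1 2 El_def wsum_diff ..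
    qed (simp add: B_def)
    finally show ?thesis .
  qed
  have tele: "trace_norm (El k z) \<le> (\<Sum>i\<in>{1..k}. trace_norm (Dl i z))" for k z
  proof (induction k)
    case 0
    have "El 0 z = wsum d B (\<lambda>z'. 0) \<rho>" unfolding El_def by (intro wsum_cong) simp
    hence "trace_norm (El 0 z) = 0" using tn_zero_weights[OF Wh[of B "\<lambda>_. 0"]] by simp
    thus ?case by simp
  next
    case (Suc k)
    have "El (Suc k) z = Dl (Suc k) z + El k z"
      unfolding Dl_def El_def wsum_add by (intro wsum_cong) simp
    hence "trace_norm (El (Suc k) z) \<le> trace_norm (Dl (Suc k) z) + trace_norm (El k z)"
      using tn_triangle[OF Dlh Elh] by simp
    also have "\<dots> \<le> trace_norm (Dl (Suc k) z) + (\<Sum>i\<in>{1..k}. trace_norm (Dl i z))"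
      using Suc.IH by simp
    also have "\<dots> = (\<Sum>i\<in>{1..Suc k}. trace_norm (Dl i z))" by simp
    finally show ?case .
  qed
  have Dl_eq: "trace_norm (Dl i z) = trace_norm (Dm i (take (i-1) z)) / 2^(m-(i-1))"
    if i: "1 \<le> i" "i \<le> m" and z: "z \<in> B" for i z
  proof -
    define y where "y = take (i-1) z"
    define b where "b = z ! (i-1)"
    define c where "c = (if b then -1 else 1) / (2::real)^(m-(i-1))"
    have lz: "length z = m" using z by (simp add: B_def bitstrings_def)
    have tz: "take i z = y @ [b]"
    proof -
      have "take i z = take (Suc (i-1)) z" using i by simp
      also have "\<dots> = take (i-1) z @ [z!(i-1)]" using i lz by (intro take_Suc_conv_app_nth) simp
      finally show ?thesis by (simp add: y_def b_def)
    qed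
    define dl where "dl z' = (if take (i-1) z' = y \<and> \<not> z'!(i-1) then p z' else 0) - (if take (i-1) z' = y \<and> z'!(i-1) then p z' else 0)" for z'
    have Dmw: "Dm i y = wsum d B dl \<rho>"
    proof -
      have "Dm i y = wsum d B (\<lambda>z'. if z' \<in> {z\<in>bitstrings m. take (i-1) z = y \<and> \<not> z!(i-1)} then p z' else 0) \<rho>
          - wsum d B (\<lambda>z'. if z' \<in> {z\<in>bitstrings m. take (i-1) z = y \<and> z!(i-1)} then p z' else 0) \<rho>"
        unfolding Dm_def using finB by (subst (1 2) wsum_restrict[of _ B]) (auto simp: B_def)
      also have "\<dots> = wsum d B dl \<rho>"
        unfolding wsum_diff by (intro wsum_cong) (auto simp: dl_def B_def)
      finally show ?thesis .
    qed
    have pw: "(2::real)^(m-(i-1)) = 2 * 2^(m-i)"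
    proof -
      have "m - (i-1) = Suc (m - i)" using i by simp
      thus ?thesis by simp
    qed
    have "Dl i z = wsum d B (\<lambda>z'. c * dl z') \<rho>"
      unfolding Dl_def
    proof (intro wsum_cong)
      fix z' assume z': "z' \<in> B"
      have lz': "length z' = m" using z' by (simp add: B_def bitstrings_def)
      have tz': "take i z' = take (i-1) z' @ [z'!(i-1)]"
      proof -
        have "take i z' = take (Suc (i-1)) z'" using i by simp
        also have "\<dots> = take (i-1) z' @ [z'!(i-1)]" using i lz' by (intro take_Suc_conv_app_nth) simp
        finally show ?thesis .
      qed
      have eqi: "(take i z' = take i z) = (take (i-1) z' = y \<and> z'!(i-1) = b)"
        unfolding tz tz' by simp
      show "hw i z z' - hw (i-1) z z' = c * dl z'"
        unfolding hw_def eqi y_def[symmetric] c_def dl_def using pw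
        by (cases b; cases "z'!(i-1)"; cases "take (i-1) z' = y") (auto simp: field_simps)
    qed
    also have "\<dots> = complex_of_real c \<cdot>\<^sub>m Dm i y" unfolding Dmw wsum_smult ..
    finally have "trace_norm (Dl i z) = \<bar>c\<bar> * trace_norm (Dm i y)" using tn_smult[OF Dmh] by simp
    also have "\<bar>c\<bar> = 1 / 2^(m-(i-1))" by (simp add: c_def)
    finally show ?thesis by (simp add: y_def)
  qed
  have Tsum: "T i = (\<Sum>y\<in>bitstrings (i-1). trace_norm (Dm i y))" for i
    unfolding T_def using d0 Dmh by (intro tn_cq) auto
  have main: "(\<Sum>z\<in>B. trace_norm (El m z)) \<le> (\<Sum>i\<in>{1..m}. T i)"
  proof -
    have "(\<Sum>z\<in>B. trace_norm (El m z)) \<le> (\<Sum>z\<in>B. \<Sum>i\<in>{1..m}. trace_norm (Dl i z))"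
      by (intro sum_mono tele)
    also have "\<dots> = (\<Sum>i\<in>{1..m}. \<Sum>z\<in>B. trace_norm (Dl i z))" by (rule sum.swap)
    also have "\<dots> = (\<Sum>i\<in>{1..m}. T i)"
    proof (intro sum.cong refl)
      fix i assume i: "i \<in> {1..m}"
      have "(\<Sum>z\<in>B. trace_norm (Dl i z)) = (\<Sum>z\<in>B. trace_norm (Dm i (take (i-1) z)) / 2^(m-(i-1)))"
        using i by (intro sum.cong refl Dl_eq) auto
      also have "\<dots> = (\<Sum>z\<in>bitstrings m. trace_norm (Dm i (take (i-1) z))) / 2^(m-(i-1))"
        by (simp add: B_def sum_divide_distrib)
      also have "\<dots> = 2^(m-(i-1)) * (\<Sum>y\<in>bitstrings (i-1). trace_norm (Dm i y)) / 2^(m-(i-1))"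
        using i by (subst sum_take) auto
      also have "\<dots> = T i" by (simp add: Tsum)
      finally show "(\<Sum>z\<in>B. trace_norm (Dl i z)) = T i" .
    qed
    finally show ?thesis .
  qed
  show ?thesis
  proof (rule ccontr)
    assume "\<not> ?thesis"
    hence le: "\<forall>i\<in>{1..m}. T i \<le> \<epsilon> / m" unfolding T_def Dm_def by (auto simp: not_less)
    have "(\<Sum>i\<in>{1..m}. T i) \<le> (\<Sum>i\<in>{1..m}. \<epsilon> / m)" using le by (intro sum_mono) auto
    also have "\<dots> = \<epsilon>" using m_pos by simp
    finally have "(\<Sum>z\<in>B. trace_norm (El m z)) \<le> \<epsilon>" using main by simp
    thus False using far far_eq by simp
  qed
qed


end
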